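(* Let $s,D\in\mathbb N$, let $\mathcal G=\{G_1,\dots,G_t\}$ be a graph family, and let $\phi:\mathcal H\hookrightarrow\mathcal G$ be an $(s,D)$-good embedding of a rooted $[t]$-edge-colored graph $\mathcal H$. Suppose $h,h'$ are non-adjacent vertices of $\mathcal H$ with $\phi(h)\phi(h')\in E(G_r)$ for some $r\in[t]$. Let $\mathcal H'$ be the rooted graph obtained from $\mathcal H$ by adding an edge $hh'$ of color $r$, with root set equal to the roots of $\mathcal H$ together with $h$, $h'$ and all ancestors of $h$ and of $h'$. Then $\phi$ is an $(s,D)$-good embedding of $\mathcal H'$ into $\mathcal G$.
   Context: A graph family $\mathcal G=\{G_1,\dots,G_t\}$ is a collection of $t$ simple graphs on a common finite vertex set $V$. For $X\subseteq V\times[t]$, $\Gamma_{\mathcal G}(X)=\bigcup_{(v,i)\in X}\{u\in V:uv\in E(G_i)\}$. A $[t]$-edge-colored graph $\mathcal H$ is a simple graph with each edge colored in $[t]$; $H_i$ is its spanning subgraph of color-$i$ edges and $\deg_{H_i}(h)$ the number of color-$i$ edges at $h$. An embedding $\phi:\mathcal H\hookrightarrow\mathcal G$ is an injective map $V(\mathcal H)\to V$ with $\phi(x)\phi(y)\in E(G_i)$ for every edge $xy$ of color $i$. A rooted $[t]$-edge-colored graph is one with a distinguished set of roots such that, after deleting all edges with both ends roots, every connected component is a tree containing exactly one root; for a non-root $h$ the unique path from $h$ to the root set (meeting it only at its last vertex) determines the parent of $h$ (its neighbour on the path), its ancestors (the other vertices of the path), and $c(h)$, the color of the edge from $h$ to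 its parent. For fixed $D$: $P_\phi(\mathcal H)=\{(\phi(h),c(h)):h\text{ non-root}\}$ and, for $X\subseteq V\times[t]$, $R(X,\phi)=|\Gamma_{\mathcal G}(X)\setminus\phi(V(\mathcal H))|-\sum_{(v,i)\in X}[D-\deg_{H_i}(\phi^{-1}(v))]-|P_\phi(\mathcal H)\cap X|$, with $\deg_{H_i}(\phi^{-1}(v))=0$ if $v\notin\phi(V(\mathcal H))$. The embedding $\phi$ is $(s,D)$-good if $R(X,\phi)\ge0$ for every $X\subseteq V\times[t]$ with $|X|\le s$. *)

theory Defs
  imports Main
begin

definition graph_family :: "'v set \<Rightarrow> (nat \<Rightarrow> 'v \<Rightarrow> 'v \<Rightarrow> bool) \<Rightarrow> nat \<Rightarrow> bool" where
  "graph_family V G t \<longleftrightarrow> finite V \<and>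
     (\<forall>i\<in>{1..t}. \<forall>u v. G i u v \<longrightarrow> u \<in> V \<and> v \<in> V \<and> u \<noteq> v \<and> G i v u)"

definition Gamma :: "'v set \<Rightarrow> (nat \<Rightarrow> 'v \<Rightarrow> 'v \<Rightarrow> bool) \<Rightarrow> ('v \<times> nat) set \<Rightarrow> 'v set" where
  "Gamma V G X = (\<Union>(v,i)\<in>X. {u \<in> V. G i u v})"

definition colored_graph :: "nat \<Rightarrow> 'h set \<Rightarrow> 'h set set \<Rightarrow> ('h set \<Rightarrow> nat) \<Rightarrow> bool" where
  "colored_graph t VH E col \<longleftrightarrow> finite VH \<and>
     (\<forall>e\<in>E. \<exists>x y. x \<noteq> y \<and> x \<in> VH \<and> y \<in> VH \<and> e = {x, y}) \<and>
     (\<forall>e\<in>E. col e \<in> {1..t})"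

definition is_walk :: "'h set set \<Rightarrow> 'h list \<Rightarrow> bool" where
  "is_walk F p \<longleftrightarrow> p \<noteq> [] \<and> (\<forall>i. Suc i < length p \<longrightarrow> {p ! i, p ! Suc i} \<in> F)"

definition is_path :: "'h set set \<Rightarrow> 'h list \<Rightarrow> bool" where
  "is_path F p \<longleftrightarrow> is_walk F p \<and> distinct p"

definition is_cycle :: "'h set set \<Rightarrow> 'h list \<Rightarrow> bool" where
  "is_cycle F p \<longleftrightarrow> is_path F p \<and> length p \<ge> 3 \<and> {last p, hd p} \<in> F"

definition reach :: "'h set set \<Rightarrow> 'h \<Rightarrow> 'h \<Rightarrow> bool" where
  "reach F x y \<longleftrightarrow> (\<exists>p. is_path F p \<and> hd p = x \<and> last p = y)"

definition fedges :: "'h set set \<Rightarrow> 'h set \<Rightarrow> 'h set set" where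
  "fedges E Rt = {e \<in> E. \<not> e \<subseteq> Rt}"

definition rooted :: "nat \<Rightarrow> 'h set \<Rightarrow> 'h set set \<Rightarrow> ('h set \<Rightarrow> nat) \<Rightarrow> 'h set \<Rightarrow> bool" where
  "rooted t VH E col Rt \<longleftrightarrow> colored_graph t VH E col \<and> Rt \<subseteq> VH \<and>
     \<not> (\<exists>p. set p \<subseteq> VH \<and> is_cycle (fedges E Rt) p) \<and>
     (\<forall>v\<in>VH. \<exists>!r. r \<in> Rt \<and> reach (fedges E Rt) v r)"

definition root_path :: "'h set set \<Rightarrow> 'h set \<Rightarrow> 'h \<Rightarrow> 'h list \<Rightarrow> bool" where
  "root_path E Rt h p \<longleftrightarrow> is_path E p \<and> hd p = h \<and> last p \<in> Rt \<and>
     (\<forall>x\<in>set (butlast p). x \<notin> Rt)"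

definition the_root_path :: "'h set set \<Rightarrow> 'h set \<Rightarrow> 'h \<Rightarrow> 'h list" where
  "the_root_path E Rt h = (THE p. root_path E Rt h p)"

definition parent :: "'h set set \<Rightarrow> 'h set \<Rightarrow> 'h \<Rightarrow> 'h" where
  "parent E Rt h = the_root_path E Rt h ! 1"

definition ancestors :: "'h set set \<Rightarrow> 'h set \<Rightarrow> 'h \<Rightarrow> 'h set" where
  "ancestors E Rt h = set (tl (the_root_path E Rt h))"

definition pcol :: "'h set set \<Rightarrow> ('h set \<Rightarrow> nat) \<Rightarrow> 'h set \<Rightarrow> 'h \<Rightarrow> nat" where
  "pcol E col Rt h = col {h, parent E Rt h}"

definition embedding :: "'v set \<Rightarrow> (nat \<Rightarrow> 'v \<Rightarrow> 'v \<Rightarrow> bool) \<Rightarrow> 'h set \<Rightarrow> 'h set set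
     \<Rightarrow> ('h set \<Rightarrow> nat) \<Rightarrow> ('h \<Rightarrow> 'v) \<Rightarrow> bool" where
  "embedding V G VH E col \<phi> \<longleftrightarrow> inj_on \<phi> VH \<and> \<phi> ` VH \<subseteq> V \<and>
     (\<forall>x y. {x, y} \<in> E \<longrightarrow> G (col {x, y}) (\<phi> x) (\<phi> y))"

definition cdeg :: "'h set set \<Rightarrow> ('h set \<Rightarrow> nat) \<Rightarrow> nat \<Rightarrow> 'h \<Rightarrow> nat" where
  "cdeg E col i x = card {e \<in> E. x \<in> e \<and> col e = i}"

definition pdeg :: "'h set \<Rightarrow> 'h set set \<Rightarrow> ('h set \<Rightarrow> nat) \<Rightarrow> ('h \<Rightarrow> 'v) \<Rightarrow> nat \<Rightarrow> 'v \<Rightarrow> nat" where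
  "pdeg VH E col \<phi> i v = (if v \<in> \<phi> ` VH then cdeg E col i (the_inv_into VH \<phi> v) else 0)"

definition Pset :: "'h set \<Rightarrow> 'h set set \<Rightarrow> ('h set \<Rightarrow> nat) \<Rightarrow> 'h set \<Rightarrow> ('h \<Rightarrow> 'v) \<Rightarrow> ('v \<times> nat) set" where
  "Pset VH E col Rt \<phi> = {(\<phi> x, pcol E col Rt x) | x. x \<in> VH - Rt}"

definition Rval :: "'v set \<Rightarrow> (nat \<Rightarrow> 'v \<Rightarrow> 'v \<Rightarrow> bool) \<Rightarrow> nat \<Rightarrow> 'h set \<Rightarrow> 'h set set
     \<Rightarrow> ('h set \<Rightarrow> nat) \<Rightarrow> 'h set \<Rightarrow> ('h \<Rightarrow> 'v) \<Rightarrow> ('v \<times> nat) set \<Rightarrow> int" where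
  "Rval V G D VH E col Rt \<phi> X =
     int (card (Gamma V G X - \<phi> ` VH))
     - (\<Sum>(v,i)\<in>X. int D - int (pdeg VH E col \<phi> i v))
     - int (card (Pset VH E col Rt \<phi> \<inter> X))"

definition good :: "nat \<Rightarrow> nat \<Rightarrow> 'v set \<Rightarrow> (nat \<Rightarrow> 'v \<Rightarrow> 'v \<Rightarrow> bool) \<Rightarrow> nat \<Rightarrow> 'h set
     \<Rightarrow> 'h set set \<Rightarrow> ('h set \<Rightarrow> nat) \<Rightarrow> 'h set \<Rightarrow> ('h \<Rightarrow> 'v) \<Rightarrow> bool" where
  "good s D V G t VH E col Rt \<phi> \<longleftrightarrow> rooted t VH E col Rt \<and> embedding V G VH E col \<phi> \<and>
     (\<forall>X. X \<subseteq> V \<times> {1..t} \<longrightarrow> card X \<le> s \<longrightarrow> Rval V G D VH E col Rt \<phi> X \<ge> 0)"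

end

theory Submission
  imports Defs
begin


abbreviation Ed :: "'h set set \<Rightarrow> 'h \<Rightarrow> 'h \<Rightarrow> bool" where
  "Ed F \<equiv> (\<lambda>a b. {a, b} \<in> F)"

lemma walk_succ: "is_walk F p \<longleftrightarrow> p \<noteq> [] \<and> successively (Ed F) p"
  unfolding is_walk_def successively_conv_nth by blast

lemma path_succ: "is_path F p \<longleftrightarrow> p \<noteq> [] \<and> successively (Ed F) p \<and> distinct p"
  unfolding is_path_def walk_succ by blast

lemma Ed_sym: "Ed F a b = Ed F b a" by (simp add: insert_commute)

lemma succ_rev_Ed: "successively (Ed F) (rev xs) = successively (Ed F) xs"
  by (simp add: insert_commute)

lemma path_mono: "is_path F p \<Longrightarrow> F \<subseteq> F' \<Longrightarrow> is_path F' p"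
  unfolding path_succ by (auto elim: successively_mono)

lemma cycle_mono: "is_cycle F p \<Longrightarrow> F \<subseteq> F' \<Longrightarrow> is_cycle F' p"
  unfolding is_cycle_def using path_mono by blast

lemma succ_take: "successively P xs \<Longrightarrow> successively P (take n xs)"
  using successively_append_iff[of P "take n xs" "drop n xs"] by simp

lemma succ_drop: "successively P xs \<Longrightarrow> successively P (drop n xs)"
  using successively_append_iff[of P "take n xs" "drop n xs"] by simp

lemma path_take: "is_path F p \<Longrightarrow> n > 0 \<Longrightarrow> is_path F (take n p)"
  unfolding path_succ by (auto simp: succ_take)

lemma path_drop: "is_path F p \<Longrightarrow> n < length p \<Longrightarrow> is_path F (drop n p)"
  unfolding path_succ by (auto simp: succ_drop)

lemma path_unique:
  assumes "\<not> (\<exists>c. set c \<subseteq> VH \<and> is_cycle F c)"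
    and "is_path F p1" "is_path F p2" "set p1 \<subseteq> VH" "set p2 \<subseteq> VH"
    and "hd p1 = hd p2" "last p1 = last p2"
  shows "p1 = p2"
  using assms(2-)
proof (induction p1 arbitrary: p2)
  case Nil then show ?case by (simp add: path_succ)
next
  case (Cons x p)
  obtain q where q: "p2 = x # q" using Cons.prems
    by (cases p2) (auto simp: path_succ)
  have dp: "x \<notin> set p" "distinct p" and dq: "x \<notin> set q" "distinct q"
    using Cons.prems q by (auto simp: path_succ)
  have sp: "successively (Ed F) (x # p)" and sq: "successively (Ed F) (x # q)"
    using Cons.prems q by (auto simp: path_succ)
  show ?case
  proof (cases "p = []")
    case True
    show ?thesis
    proof (cases "q = []")
      case False
      then have "last q \<in> set q" by simp
      moreover have "last q = x" using Cons.prems q True False by simp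
      ultimately show ?thesis using dq by simp
    qed (use q True in simp)
  next
    case pne: False
    show ?thesis
    proof (cases "q = []")
      case True then show ?thesis using Cons.prems q dp pne by auto
    next
      case qne: False
      show ?thesis
      proof (cases "hd p = hd q")
        case True
        have "p = q"
          apply (rule Cons.IH)
          using Cons.prems q pne qne True sp sq dp dq
          by (auto simp: path_succ successively_Cons)
        then show ?thesis using q by simp
      next
        case hne: False
        have "last p \<in> set q" using Cons.prems q pne qne by simp
        then obtain u z w where pu: "p = u @ z # w" and zq: "z \<in> set q" and uq: "\<forall>y\<in>set u. y \<notin> set q"
          using split_list_first_propE[of p "\<lambda>y. y \<in> set q"] pne by (metis last_in_set)
        obtain u' w' where qu: "q = u' @ z # w'" using zq split_list by metis
        define c where "c = (x # u @ [z]) @ rev u'"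
        have "distinct c" using dp dq pu qu uq unfolding c_def by auto
        moreover have "length c \<ge> 3"
        proof -
          have "u \<noteq> [] \<or> u' \<noteq> []" using hne pu qu by auto
          then show ?thesis unfolding c_def by (cases u; cases u') auto
        qed
        moreover have "successively (Ed F) c"
        proof -
          have a: "successively (Ed F) (x # u @ [z])"
            using sp pu succ_take[of _ "x # p" "Suc (Suc (length u))"] by simp
          have b: "successively (Ed F) (u' @ [z])"
            using sq qu succ_take[of _ "x # q" "Suc (Suc (length u'))"]
            by (simp add: successively_Cons successively_append_iff split: if_splits)
          then have b1: "successively (Ed F) u'" "u' \<noteq> [] \<Longrightarrow> Ed F (last u') z"
            by (auto simp: successively_append_iff)
          have b2: "successively (Ed F) (rev u')" using b1 succ_rev_Ed by blast
          have "(x # u @ [z]) = [] \<or> rev u' = [] \<or> Ed F (last (x # u @ [z])) (hd (rev u'))"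
            using b1(2) by (cases "u' = []") (auto simp: hd_rev insert_commute)
          then show ?thesis unfolding c_def using a b2 successively_append_iff by blast
        qed
        moreover have "{last c, hd c} \<in> F"
        proof -
          have "last c = hd q" unfolding c_def using qu by (cases u') (auto simp: last_rev)
          moreover have "{x, hd q} \<in> F" using sq qne by (cases q) auto
          ultimately show ?thesis unfolding c_def by (simp add: insert_commute)
        qed
        moreover have "set c \<subseteq> VH" using Cons.prems pu qu q unfolding c_def by auto
        ultimately show ?thesis using assms(1) unfolding is_cycle_def path_succ
          by (metis list.size(3) not_numeral_le_zero)
      qed
    qed
  qed
qed




lemma first_prefix:
  assumes "is_path F p" "last p \<in> S"
  shows "\<exists>k<length p. p!k \<in> S \<and> (\<forall>i<k. p!i \<notin> S) \<and> is_path {e\<in>F. \<not> e \<subseteq> S} (take (Suc k) p)"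
proof -
  have pne: "p \<noteq> []" using assms by (simp add: path_succ)
  have ex: "\<exists>k. k < length p \<and> p!k \<in> S"
    using assms pne by (metis diff_less last_conv_nth length_greater_0_conv zero_less_one)
  define k where "k = (LEAST k. k < length p \<and> p!k \<in> S)"
  have k: "k < length p" "p!k \<in> S" using LeastI_ex[OF ex] unfolding k_def by auto
  have kl: "\<forall>i<k. p!i \<notin> S" using not_less_Least k(1) unfolding k_def
    by (metis (mono_tags, lifting) order.strict_trans)
  have "is_path {e\<in>F. \<not> e \<subseteq> S} (take (Suc k) p)"
    using assms(1) kl k unfolding is_path_def is_walk_def by auto
  then show ?thesis using k kl by blast
qed

lemma cg_edge_ex: "colored_graph t VH E col \<Longrightarrow> e \<in> E \<Longrightarrow> \<exists>x y. x \<noteq> y \<and> x \<in> VH \<and> y \<in> VH \<and> e = {x, y}"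
  unfolding colored_graph_def by (erule conjE, erule conjE, erule bspec)

lemma cg_edge: "colored_graph t VH E col \<Longrightarrow> {a, b} \<in> E \<Longrightarrow> a \<noteq> b \<and> a \<in> VH \<and> b \<in> VH"
proof -
  assume "colored_graph t VH E col" "{a, b} \<in> E"
  then obtain x y where "x \<noteq> y" "x \<in> VH" "y \<in> VH" "{a, b} = {x, y}" using cg_edge_ex by metis
  then show ?thesis by (auto simp: doubleton_eq_iff)
qed

lemma cg_edge_sub: "colored_graph t VH E col \<Longrightarrow> e \<in> E \<Longrightarrow> e \<subseteq> VH"
  using cg_edge_ex by fastforce

lemma walk_set:
  assumes "is_walk F p" "\<forall>e\<in>F. e \<subseteq> VH" "hd p \<in> VH"
  shows "set p \<subseteq> VH"
proof
  fix y assume "y \<in> set p"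
  then obtain i where i: "i < length p" "p!i = y" by (auto simp: in_set_conv_nth)
  show "y \<in> VH"
  proof (cases i)
    case 0 then show ?thesis using i assms by (simp add: hd_conv_nth is_walk_def)
  next
    case (Suc j)
    then have "{p!j, p!i} \<in> F" using assms(1) i unfolding is_walk_def by auto
    then show ?thesis using assms(2) i by auto
  qed
qed

lemma fedges_sub: "fedges E Rt \<subseteq> E" unfolding fedges_def by auto

lemma rp_ne: "root_path E Rt x p \<Longrightarrow> p \<noteq> [] \<and> hd p = x"
  unfolding root_path_def is_path_def is_walk_def by auto

lemma root_path_F:
  assumes "root_path E Rt x p" shows "is_path (fedges E Rt) p"
proof -
  have "\<And>i. Suc i < length p \<Longrightarrow> p!i \<notin> Rt"
    using assms unfolding root_path_def
    by (metis Suc_lessE diff_Suc_1 in_set_conv_nth length_butlast nth_butlast)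
  moreover have "is_path E p" using assms unfolding root_path_def by blast
  ultimately show ?thesis unfolding is_path_def is_walk_def fedges_def
    by (metis (no_types, lifting) insert_subset mem_Collect_eq)
qed

lemma root_path_set:
  assumes "colored_graph t VH E col" "root_path E Rt x p" "x \<in> VH"
  shows "set p \<subseteq> VH"
proof -
  have "is_walk E p" "hd p = x" using assms(2) unfolding root_path_def is_path_def by auto
  moreover have "\<forall>e\<in>E. e \<subseteq> VH" using cg_edge_sub[OF assms(1)] by blast
  ultimately show ?thesis using walk_set[of E p VH] assms(3) by simp
qed

lemma rooted_acyc: "rooted t VH E col Rt \<Longrightarrow> \<not> (\<exists>c. set c \<subseteq> VH \<and> is_cycle (fedges E Rt) c)"
  unfolding rooted_def by simp

lemma rooted_reach: "rooted t VH E col Rt \<Longrightarrow> v \<in> VH \<Longrightarrow> \<exists>!r. r \<in> Rt \<and> reach (fedges E Rt) v r"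
  unfolding rooted_def by simp

lemma rooted_cg: "rooted t VH E col Rt \<Longrightarrow> colored_graph t VH E col" unfolding rooted_def by simp

lemma root_path_unique:
  assumes R: "rooted t VH E col Rt" and "x \<in> VH" "root_path E Rt x p1" "root_path E Rt x p2"
  shows "p1 = p2"
proof -
  have cg: "colored_graph t VH E col" using R rooted_cg by blast
  have "reach (fedges E Rt) x (last p1)" "reach (fedges E Rt) x (last p2)"
    unfolding reach_def using root_path_F[OF assms(3)] root_path_F[OF assms(4)] rp_ne[OF assms(3)] rp_ne[OF assms(4)] by auto
  moreover have "last p1 \<in> Rt" "last p2 \<in> Rt" using assms(3,4) unfolding root_path_def by auto
  ultimately have "last p1 = last p2" using rooted_reach[OF R assms(2)] by (metis (no_types, lifting))
  moreover have "\<not> (\<exists>c. set c \<subseteq> VH \<and> is_cycle (fedges E Rt) c)" using rooted_acyc[OF R] .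
  moreover have "set p1 \<subseteq> VH" "set p2 \<subseteq> VH" using root_path_set[OF cg] assms by blast+
  moreover have "hd p1 = hd p2" using rp_ne assms(3,4) by metis
  ultimately show ?thesis
    using path_unique[of VH "fedges E Rt" p1 p2, OF _ root_path_F[OF assms(3)] root_path_F[OF assms(4)]] by simp
qed

lemma root_path_exists:
  assumes R: "rooted t VH E col Rt" and x: "x \<in> VH"
  shows "\<exists>p. root_path E Rt x p"
proof -
  obtain r p where "r \<in> Rt" "is_path (fedges E Rt) p" "hd p = x" "last p = r"
    using rooted_reach[OF R x] unfolding reach_def by blast
  then obtain k where k: "k < length p" "p!k \<in> Rt" "\<forall>i<k. p!i \<notin> Rt"
     "is_path {e\<in>fedges E Rt. \<not> e \<subseteq> Rt} (take (Suc k) p)"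
    using first_prefix[of "fedges E Rt" p Rt] by blast
  have "is_path E (take (Suc k) p)" using k(4) path_mono[of _ _ E] unfolding fedges_def by blast
  moreover have "hd (take (Suc k) p) = x" using \<open>hd p = x\<close> k(1)
    by (metis hd_take zero_less_Suc)
  moreover have "last (take (Suc k) p) = p!k" using k(1) by (simp add: take_Suc_conv_app_nth)
  moreover have "\<forall>y\<in>set (butlast (take (Suc k) p)). y \<notin> Rt"
    using k by (auto simp: butlast_take in_set_conv_nth)
  ultimately show ?thesis using k unfolding root_path_def by metis
qed

lemma the_rp:
  assumes "rooted t VH E col Rt" "x \<in> VH"
  shows "root_path E Rt x (the_root_path E Rt x)"
  using assms root_path_exists root_path_unique unfolding the_root_path_def
  by (metis (mono_tags, lifting) theI)

lemma the_rp_eq: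
  assumes "rooted t VH E col Rt" "x \<in> VH" "root_path E Rt x p"
  shows "the_root_path E Rt x = p"
  using assms the_rp root_path_unique by metis

lemma rp_drop:
  assumes "root_path E Rt x p" "j < length p"
  shows "root_path E Rt (p!j) (drop j p)"
  using assms unfolding root_path_def
  by (auto simp: path_drop hd_drop_conv_nth butlast_drop dest: in_set_dropD)

lemma rp_len2:
  assumes "root_path E Rt x p" "x \<notin> Rt" shows "length p \<ge> 2"
proof -
  have "p \<noteq> []" "hd p = x" using rp_ne[OF assms(1)] by auto
  moreover have "last p \<in> Rt" using assms unfolding root_path_def by auto
  ultimately show ?thesis using assms(2)
  proof (cases p)
    case (Cons a q) then show ?thesis using \<open>last p \<in> Rt\<close> \<open>hd p = x\<close> assms(2) by (cases q) auto
  qed auto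
qed




lemma rp_single: "y \<in> Rt \<Longrightarrow> root_path E Rt y [y]"
  unfolding root_path_def is_path_def is_walk_def by simp

lemma rp_cons:
  assumes "root_path E Rt y Q" "{x, y} \<in> E" "x \<notin> set Q" "x \<notin> Rt"
  shows "root_path E Rt x (x # Q)"
proof -
  have Q: "Q \<noteq> []" "hd Q = y" using rp_ne[OF assms(1)] by auto
  have "is_path E Q" using assms(1) unfolding root_path_def by blast
  then have "is_path E (x # Q)" using assms Q unfolding path_succ by (cases Q) auto
  moreover have "butlast (x # Q) = x # butlast Q" using Q by simp
  ultimately show ?thesis using assms Q unfolding root_path_def by auto
qed

context
  fixes t VH E col Rt
  assumes R: "rooted t VH E col Rt"
begin

abbreviation "q \<equiv> the_root_path E Rt"
abbreviation "\<pi> \<equiv> parent E Rt"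

lemma cg: "colored_graph t VH E col" using rooted_cg[OF R] .

lemma Q1: "x \<in> VH \<Longrightarrow> root_path E Rt x (q x)" using the_rp[OF R] .

lemma Q1set: "x \<in> VH \<Longrightarrow> set (q x) \<subseteq> VH" using root_path_set[OF cg Q1] .

lemma Q3: assumes "x \<in> VH" "j < length (q x)" shows "q (q x ! j) = drop j (q x)"
proof -
  have "q x ! j \<in> VH" using Q1set[OF assms(1)] assms(2) by auto
  then show ?thesis using the_rp_eq[OF R _ rp_drop[OF Q1[OF assms(1)] assms(2)]] by blast
qed

lemma Q2: assumes "x \<in> VH" "x \<notin> Rt" shows "q x = x # q (\<pi> x)" "\<pi> x \<in> VH"
proof -
  have l: "length (q x) \<ge> 2" using rp_len2[OF Q1[OF assms(1)] assms(2)] .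
  have h: "q x \<noteq> []" "hd (q x) = x" using rp_ne[OF Q1[OF assms(1)]] by auto
  have "q (\<pi> x) = drop 1 (q x)" unfolding parent_def using Q3[OF assms(1)] l by simp
  then show "q x = x # q (\<pi> x)" using h by (cases "q x") auto
  show "\<pi> x \<in> VH" unfolding parent_def using Q1set[OF assms(1)] l by auto
qed

lemma K_aux:
  assumes e: "{x, y} \<in> fedges E Rt" and y: "y \<notin> Rt"
  shows "(x \<notin> Rt \<and> y = \<pi> x) \<or> x = \<pi> y"
proof -
  have eE: "{x, y} \<in> E" using e unfolding fedges_def by auto
  have xy: "x \<noteq> y" "x \<in> VH" "y \<in> VH" using cg_edge[OF cg eE] by auto
  have eE': "{y, x} \<in> E" using eE by (simp add: insert_commute)
  define Q where "Q = q y"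
  have Qr: "root_path E Rt y Q" unfolding Q_def using Q1[OF xy(3)] .
  have Qh: "Q \<noteq> []" "hd Q = y" using rp_ne[OF Qr] by auto
  show ?thesis
  proof (cases "x \<in> Rt")
    case True
    have "root_path E Rt y [y, x]" using rp_cons[OF rp_single[OF True] eE'] xy y by simp
    then have "q y = [y, x]" using the_rp_eq[OF R xy(3)] by blast
    then show ?thesis unfolding parent_def by simp
  next
    case xn: False
    show ?thesis
    proof (cases "x \<in> set Q")
      case False
      have "root_path E Rt x (x # Q)" using rp_cons[OF Qr eE False xn] .
      then have "q x = x # Q" using the_rp_eq[OF R xy(2)] by blast
      then have "\<pi> x = y" unfolding parent_def using Qh by (cases Q) auto
      then show ?thesis using xn by blast
    next
      case True
      then obtain j where j: "j < length Q" "Q ! j = x" by (auto simp: in_set_conv_nth)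
      have "j \<noteq> 0" using j Qh xy(1) by (metis hd_conv_nth)
      show ?thesis
      proof (cases "j = 1")
        case True then show ?thesis using j unfolding parent_def Q_def by simp
      next
        case False
        with \<open>j \<noteq> 0\<close> have j2: "j \<ge> 2" by simp
        define c where "c = take (Suc j) Q"
        have "is_path (fedges E Rt) c" unfolding c_def using path_take[OF root_path_F[OF Qr]] by simp
        moreover have "length c \<ge> 3" unfolding c_def using j j2 by simp
        moreover have "last c = x" unfolding c_def using j by (simp add: take_Suc_conv_app_nth)
        moreover have "hd c = y" unfolding c_def using Qh by (cases Q) auto
        moreover have "set c \<subseteq> VH" unfolding c_def using Q1set[OF xy(3)] Q_def
          by (meson order.trans set_take_subset)
        ultimately have "set c \<subseteq> VH \<and> is_cycle (fedges E Rt) c" using e unfolding is_cycle_def by simp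
        then show ?thesis using rooted_acyc[OF R] by blast
      qed
    qed
  qed
qed

lemma K:
  assumes e: "{x, y} \<in> fedges E Rt"
  shows "(x \<notin> Rt \<and> y = \<pi> x) \<or> (y \<notin> Rt \<and> x = \<pi> y)"
proof (cases "y \<in> Rt")
  case False then show ?thesis using K_aux[OF e] by blast
next
  case True
  have "\<not> {x, y} \<subseteq> Rt" using e unfolding fedges_def by auto
  then have xn: "x \<notin> Rt" using True by auto
  have "{y, x} \<in> fedges E Rt" using e by (simp add: insert_commute)
  then show ?thesis using K_aux[of y x] xn True by blast
qed

end




context
  fixes t VH E col Rt h h'
  assumes R: "rooted t VH E col Rt" and hV: "h \<in> VH" and hV': "h' \<in> VH"
begin

abbreviation "S \<equiv> Rt \<union> set (the_root_path E Rt h) \<union> set (the_root_path E Rt h')"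
abbreviation "F' \<equiv> fedges (insert {h, h'} E) S"

lemma Rt_sub: "Rt \<subseteq> VH" using R unfolding rooted_def by simp

lemma S_eq: "Rt \<union> {h, h'} \<union> ancestors E Rt h \<union> ancestors E Rt h' = S"
proof -
  have a: "set (the_root_path E Rt z) = insert z (ancestors E Rt z)" if zV: "z \<in> VH" for z
  proof -
    obtain xs where "the_root_path E Rt z = z # xs" using rp_ne[OF Q1[OF R zV]] by (cases "the_root_path E Rt z") auto
    then show ?thesis unfolding ancestors_def by simp
  qed
  show ?thesis using a[OF hV] a[OF hV'] by auto
qed

lemma S_sub: "S \<subseteq> VH" using Rt_sub Q1set[OF R hV] Q1set[OF R hV'] by auto

lemma hS: "h \<in> S" "h' \<in> S"
  using rp_ne[OF Q1[OF R hV]] rp_ne[OF Q1[OF R hV']] by (metis UnI1 UnI2 hd_in_set)+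

lemma up_aux:
  assumes z: "z \<in> VH" and y: "y \<in> set (the_root_path E Rt z)" "y \<notin> Rt"
  shows "parent E Rt y \<in> set (the_root_path E Rt z)"
proof -
  obtain j where j: "j < length (the_root_path E Rt z)" "the_root_path E Rt z ! j = y"
    using y by (auto simp: in_set_conv_nth)
  have yV: "y \<in> VH" using Q1set[OF R z] y by auto
  have qy: "the_root_path E Rt y = drop j (the_root_path E Rt z)" using Q3[OF R z j(1)] j(2) by simp
  have "length (the_root_path E Rt y) \<ge> 2" using rp_len2[OF Q1[OF R yV] y(2)] .
  then have "Suc j < length (the_root_path E Rt z)" using qy by simp
  moreover have "parent E Rt y = the_root_path E Rt z ! Suc j"
    unfolding parent_def qy using j by simp
  ultimately show ?thesis by simp
qed

lemma up: "y \<in> S \<Longrightarrow> y \<notin> Rt \<Longrightarrow> parent E Rt y \<in> S"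
  using up_aux[OF hV, of y] up_aux[OF hV', of y] by auto

lemma Fsub: "F' \<subseteq> fedges E Rt"
proof
  fix e assume e: "e \<in> F'"
  then have "e \<noteq> {h, h'}" using hS unfolding fedges_def by auto
  then show "e \<in> fedges E Rt" using e unfolding fedges_def by auto
qed

lemma C:
  "is_path F' p \<Longrightarrow> hd p \<in> VH \<Longrightarrow> last p \<in> S \<Longrightarrow>
    p = take (length p) (the_root_path E Rt (hd p)) \<and> (\<forall>y\<in>set (butlast p). y \<notin> S)"
proof (induction p)
  case Nil then show ?case by (simp add: path_succ)
next
  case (Cons v p')
  note IHo = Cons.IH and pr = Cons.prems
  let ?q = "the_root_path E Rt"
  have vV: "v \<in> VH" using pr by simp
  obtain xs where qv: "?q v = v # xs" using rp_ne[OF Q1[OF R vV]] by (cases "?q v") auto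
  show ?case
  proof (cases p')
    case Nil then show ?thesis using qv by simp
  next
    case (Cons w p'')
    have s1: "p' \<noteq> []" "successively (Ed F') (v # p')" "distinct (v # p')"
      using pr(1) Cons unfolding path_succ by auto
    have eF': "{v, w} \<in> F'" using s1(2) Cons by simp
    have pp: "is_path F' p'" using s1 Cons unfolding path_succ by simp
    have dv: "v \<notin> set p'" using s1(3) by simp
    have eF: "{v, w} \<in> fedges E Rt" using eF' Fsub by blast
    have nS: "\<not> {v, w} \<subseteq> S" using eF' unfolding fedges_def by blast
    have wV: "w \<in> VH" using cg_edge[OF cg[OF R], of v w] eF fedges_sub by blast
    have IH: "p' = take (length p') (?q w)" "\<forall>y\<in>set (butlast p'). y \<notin> S"
    proof -
      have "hd p' = w" using Cons by simp
      moreover have "hd p' \<in> VH" "last p' \<in> S" using Cons wV pr(3) by simp_all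
      ultimately show "p' = take (length p') (?q w)" "\<forall>y\<in>set (butlast p'). y \<notin> S"
        using IHo[OF pp] by metis+
    qed
    from K[OF R eF] show ?thesis
    proof
      assume a: "v \<notin> Rt \<and> w = parent E Rt v"
      have "?q v = v # ?q w" using Q2(1)[OF R vV] a by metis
      moreover have "take (length p') (?q w) = p'" by (rule sym[OF IH(1)])
      ultimately have "take (length (v # p')) (?q (hd (v # p'))) = v # p'" by simp
      moreover have "v \<notin> S" using up[of v] a nS by auto
      moreover have "\<forall>y\<in>set (butlast (v # p')). y \<notin> S" using IH(2) Cons \<open>v \<notin> S\<close> by simp
      ultimately show ?thesis by metis
    next
      assume a: "w \<notin> Rt \<and> v = parent E Rt w"
      have wS: "w \<notin> S" using up[of w] a nS by auto
      then have "p'' \<noteq> []" using pr(3) \<open>p' = w # p''\<close> by auto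
      then have "length p' \<ge> 2" using \<open>p' = w # p''\<close> by (cases p'') auto
      have "length (?q w) \<ge> 2" using rp_len2[OF Q1[OF R wV]] a by blast
      then have "p' ! 1 = ?q w ! 1" using IH(1) \<open>length p' \<ge> 2\<close>
        by (metis Suc_1 less_le_trans lessI nth_take)
      then have "p' ! 1 = v" using a unfolding parent_def by simp
      then have "v \<in> set p'" using \<open>length p' \<ge> 2\<close> by (metis Suc_1 Suc_le_lessD nth_mem)
      then show ?thesis using dv by simp
    qed
  qed
qed

end




lemma prefix_first:
  assumes "p1 = take (length p1) Q" "p2 = take (length p2) Q" "p1 \<noteq> []" "p2 \<noteq> []"
    "last p1 \<in> T" "last p2 \<in> T" "\<forall>y\<in>set (butlast p1). y \<notin> T" "\<forall>y\<in>set (butlast p2). y \<notin> T"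
  shows "p1 = p2"
proof -
  have *: False if a: "a = take (length a) Q" "b = take (length b) Q" "a \<noteq> []" "last a \<in> T"
     "\<forall>y\<in>set (butlast b). y \<notin> T" "length a < length b" for a b
  proof -
    define n where "n = length a - 1"
    have n1: "n < length a" "n < length b - 1" using a(3,6) unfolding n_def by (cases a, auto)+
    have "last a = a ! n" using a(3) unfolding n_def by (simp add: last_conv_nth)
    also have "a ! n = take (length a) Q ! n" using arg_cong[of _ _ "\<lambda>l. l ! n", OF a(1)] .
    also have "\<dots> = Q ! n" using n1(1) by simp
    also have "\<dots> = take (length b) Q ! n" using n1(2) by simp
    also have "take (length b) Q ! n = b ! n" using arg_cong[of _ _ "\<lambda>l. l ! n", OF a(2)] by simp
    also have "\<dots> = butlast b ! n" using n1(2) by (simp add: nth_butlast)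
    finally have "last a \<in> set (butlast b)" using n1(2) by simp
    then show False using a(4,5) by blast
  qed
  have "length p1 = length p2"
    using *[of p1 p2] *[of p2 p1] assms by (metis linorder_neqE_nat)
  then show ?thesis using assms(1,2) by metis
qed

context
  fixes t VH E col Rt h h' r
  assumes R: "rooted t VH E col Rt" and hV: "h \<in> VH" and hV': "h' \<in> VH"
    and hh: "h \<noteq> h'" and nE: "{h, h'} \<notin> E" and r: "r \<in> {1..t}"
begin

lemma cg': "colored_graph t VH (insert {h, h'} E) (col({h, h'} := r))"
proof -
  have c: "colored_graph t VH E col" using rooted_cg[OF R] .
  have f: "finite VH" using c unfolding colored_graph_def by simp
  have "\<forall>e\<in>insert {h, h'} E. \<exists>x y. x \<noteq> y \<and> x \<in> VH \<and> y \<in> VH \<and> e = {x, y}"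
    using cg_edge_ex[OF c] hV hV' hh by blast
  moreover have "\<forall>e\<in>insert {h, h'} E. (col({h, h'} := r)) e \<in> {1..t}"
  proof
    fix e assume "e \<in> insert {h, h'} E"
    then show "(col({h, h'} := r)) e \<in> {1..t}"
      using r c nE unfolding colored_graph_def by (cases "e = {h, h'}") auto
  qed
  ultimately show ?thesis using f unfolding colored_graph_def by blast
qed

lemma reach': assumes v: "v \<in> VH"
  shows "\<exists>!x. x \<in> S E Rt h h' \<and> reach (F' E Rt h h') v x"
proof -
  let ?S = "S E Rt h h'"
  let ?E' = "insert {h, h'} E"
  define Q where "Q = the_root_path E Rt v"
  have Qr: "root_path E Rt v Q" unfolding Q_def using Q1[OF R v] .
  have "is_path E Q" using Qr unfolding root_path_def by blast
  then have QE': "is_path ?E' Q" using path_mono[OF _ subset_insertI] by blast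
  have "last Q \<in> Rt" using Qr unfolding root_path_def by blast
  then have "last Q \<in> ?S" by (rule UnI1[OF UnI1])
  then obtain k where k: "k < length Q" "Q!k \<in> ?S"
     "is_path {e\<in>?E'. \<not> e \<subseteq> ?S} (take (Suc k) Q)"
    using first_prefix[OF QE' \<open>last Q \<in> ?S\<close>] by blast
  have "is_path (F' E Rt h h') (take (Suc k) Q)" using k(3) unfolding fedges_def by simp
  moreover have "hd (take (Suc k) Q) = v" using rp_ne[OF Qr] k(1) by (metis hd_take zero_less_Suc)
  moreover have "last (take (Suc k) Q) = Q!k" using k(1) by (simp add: take_Suc_conv_app_nth)
  ultimately have ex: "reach (F' E Rt h h') v (Q!k)" unfolding reach_def by (intro exI[of _ "take (Suc k) Q"]) simp
  have un: "x1 = x2" if asm: "x1 \<in> ?S" "reach (F' E Rt h h') v x1" "x2 \<in> ?S" "reach (F' E Rt h h') v x2" for x1 x2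
  proof -
    obtain p1 where p1: "is_path (F' E Rt h h') p1" "hd p1 = v" "last p1 = x1" using asm unfolding reach_def by blast
    obtain p2 where p2: "is_path (F' E Rt h h') p2" "hd p2 = v" "last p2 = x2" using asm unfolding reach_def by blast
    have c1: "p1 = take (length p1) Q \<and> (\<forall>y\<in>set (butlast p1). y \<notin> ?S)"
    proof -
      have "hd p1 \<in> VH" "last p1 \<in> ?S" using p1 v asm(1) by simp_all
      from C[OF R hV hV' p1(1) this] show ?thesis unfolding p1(2) Q_def .
    qed
    have c2: "p2 = take (length p2) Q \<and> (\<forall>y\<in>set (butlast p2). y \<notin> ?S)"
    proof -
      have "hd p2 \<in> VH" "last p2 \<in> ?S" using p2 v asm(3) by simp_all
      from C[OF R hV hV' p2(1) this] show ?thesis unfolding p2(2) Q_def .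
    qed
    have "p1 \<noteq> []" "p2 \<noteq> []" using p1(1) p2(1) unfolding path_succ by blast+
    then have "p1 = p2" using prefix_first[of p1 Q p2 ?S] c1 c2 p1(3) p2(3) asm(1,3) by blast
    then show ?thesis using p1 p2 by simp
  qed
  show ?thesis
  proof (rule ex1I[of _ "Q!k"])
    show "Q ! k \<in> ?S \<and> reach (F' E Rt h h') v (Q ! k)" using ex k(2) by blast
  next
    fix y assume "y \<in> ?S \<and> reach (F' E Rt h h') v y"
    then show "y = Q ! k" using un[of y "Q!k"] ex k(2) by blast
  qed
qed

lemma rooted': "rooted t VH (insert {h, h'} E) (col({h, h'} := r)) (S E Rt h h')"
proof -
  have "\<not> (\<exists>c. set c \<subseteq> VH \<and> is_cycle (F' E Rt h h') c)"
  proof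
    assume "\<exists>c. set c \<subseteq> VH \<and> is_cycle (F' E Rt h h') c"
    then obtain c where "set c \<subseteq> VH" "is_cycle (F' E Rt h h') c" by blast
    then have "set c \<subseteq> VH \<and> is_cycle (fedges E Rt) c" using cycle_mono[OF _ Fsub[OF R hV hV']] by blast
    then show False using rooted_acyc[OF R] by blast
  qed
  moreover have "\<forall>v\<in>VH. \<exists>!x. x \<in> S E Rt h h' \<and> reach (F' E Rt h h') v x" using reach' by blast
  ultimately show ?thesis unfolding rooted_def using cg' S_sub[OF R hV hV'] by (intro conjI)
qed

lemma parent':
  assumes x: "x \<in> VH" "x \<notin> S E Rt h h'"
  shows "parent (insert {h, h'} E) (S E Rt h h') x = parent E Rt x"
proof -
  define p where "p = the_root_path (insert {h, h'} E) (S E Rt h h') x"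
  have pr: "root_path (insert {h, h'} E) (S E Rt h h') x p" unfolding p_def using the_rp[OF rooted' x(1)] .
  have "is_path (F' E Rt h h') p" using root_path_F[OF pr] .
  moreover have "hd p = x" "last p \<in> S E Rt h h'" using pr unfolding root_path_def by auto
  ultimately have pt: "p = take (length p) (the_root_path E Rt x)" using C[OF R hV hV'] x(1) by metis
  have l: "length p \<ge> 2" using rp_len2[OF pr x(2)] .
  have "p ! 1 = the_root_path E Rt x ! 1" using pt l by (metis One_nat_def Suc_1 Suc_le_lessD nth_take)
  then show ?thesis unfolding parent_def p_def[symmetric] .
qed

lemma pcol':
  assumes x: "x \<in> VH" "x \<notin> S E Rt h h'"
  shows "pcol (insert {h, h'} E) (col({h, h'} := r)) (S E Rt h h') x = pcol E col Rt x"
proof -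
  have "{x, parent E Rt x} \<noteq> {h, h'}" using x hS[OF R hV hV'] by (auto simp: doubleton_eq_iff)
  then show ?thesis unfolding pcol_def parent'[OF x] by simp
qed

end




theorem lemma2p5:
  fixes s D t r :: nat and V :: "'v set" and G :: "nat \<Rightarrow> 'v \<Rightarrow> 'v \<Rightarrow> bool"
    and VH :: "'h set" and E :: "'h set set" and col :: "'h set \<Rightarrow> nat" and Rt :: "'h set"
    and \<phi> :: "'h \<Rightarrow> 'v" and h h' :: 'h
  assumes "graph_family V G t"
    and "good s D V G t VH E col Rt \<phi>"
    and "h \<in> VH" and "h' \<in> VH" and "h \<noteq> h'" and "{h, h'} \<notin> E"
    and "r \<in> {1..t}" and "G r (\<phi> h) (\<phi> h')"
  shows "good s D V G t VH (insert {h, h'} E) (col({h, h'} := r))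
           (Rt \<union> {h, h'} \<union> ancestors E Rt h \<union> ancestors E Rt h') \<phi>"
proof -
  note gf = assms(1) and gd = assms(2) and hV = assms(3) and hV' = assms(4)
    and hh = assms(5) and nE = assms(6) and r = assms(7) and Gr = assms(8)
  have R: "rooted t VH E col Rt" using gd unfolding good_def by (elim conjE)
  have emb: "embedding V G VH E col \<phi>" using gd unfolding good_def by (elim conjE)
  have RX: "\<And>X. X \<subseteq> V \<times> {1..t} \<Longrightarrow> card X \<le> s \<Longrightarrow> Rval V G D VH E col Rt \<phi> X \<ge> 0"
    using gd unfolding good_def by (elim conjE) simp
  have Seq: "Rt \<union> {h, h'} \<union> ancestors E Rt h \<union> ancestors E Rt h' = S E Rt h h'"
    using S_eq[OF R hV hV'] .
  let ?S = "S E Rt h h'"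
  let ?E' = "insert {h, h'} E"
  let ?c' = "col({h, h'} := r)"
  have R': "rooted t VH ?E' ?c' ?S" using rooted'[OF R hV hV' hh nE r] .
  have cg: "colored_graph t VH E col" using rooted_cg[OF R] .
  have finV: "finite V" using gf unfolding graph_family_def by (elim conjE)
  have finVH: "finite VH" using cg unfolding colored_graph_def by (elim conjE)
  have finE: "finite E"
  proof -
    have "E \<subseteq> Pow VH" using cg_edge_sub[OF cg] by blast
    moreover have "finite (Pow VH)" using finVH by simp
    ultimately show ?thesis by (rule finite_subset)
  qed
  have colE: "\<And>e. e \<in> E \<Longrightarrow> ?c' e = col e" using nE by auto
  have emb': "embedding V G VH ?E' ?c' \<phi>"
    unfolding embedding_def
  proof (intro conjI allI impI)
    show "inj_on \<phi> VH" "\<phi> ` VH \<subseteq> V" using emb unfolding embedding_def by blast+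
  next
    fix x y assume xy: "{x, y} \<in> ?E'"
    show "G (?c' {x, y}) (\<phi> x) (\<phi> y)"
    proof (cases "{x, y} = {h, h'}")
      case True
      have sym: "G r (\<phi> h') (\<phi> h)" using gf r Gr unfolding graph_family_def by blast
      from True have "(x = h \<and> y = h') \<or> (x = h' \<and> y = h)" by (auto simp: doubleton_eq_iff)
      then show ?thesis using True Gr sym by auto
    next
      case False
      then have "{x, y} \<in> E" using xy by simp
      then show ?thesis using emb colE unfolding embedding_def by metis
    qed
  qed
  have Rmono: "Rval V G D VH E col Rt \<phi> X \<le> Rval V G D VH ?E' ?c' ?S \<phi> X"
    if X: "X \<subseteq> V \<times> {1..t}" for X
  proof -
    have finX: "finite X" using X finV finite_subset by (metis finite_SigmaI finite_atLeastAtMost)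
    have pd: "pdeg VH E col \<phi> i v \<le> pdeg VH ?E' ?c' \<phi> i v" for i v
    proof -
      have "cdeg E col i x \<le> cdeg ?E' ?c' i x" for x
        unfolding cdeg_def
        by (rule card_mono) (use finE colE nE in auto)
      then show ?thesis unfolding pdeg_def by simp
    qed
    have sum: "(\<Sum>(v,i)\<in>X. int D - int (pdeg VH ?E' ?c' \<phi> i v)) \<le> (\<Sum>(v,i)\<in>X. int D - int (pdeg VH E col \<phi> i v))"
      by (rule sum_mono) (use pd in auto)
    have Psub: "Pset VH ?E' ?c' ?S \<phi> \<subseteq> Pset VH E col Rt \<phi>"
    proof
      fix z assume "z \<in> Pset VH ?E' ?c' ?S \<phi>"
      then obtain x where x: "z = (\<phi> x, pcol ?E' ?c' ?S x)" "x \<in> VH" "x \<notin> ?S" unfolding Pset_def by blast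
      have "pcol ?E' ?c' ?S x = pcol E col Rt x" using pcol'[OF R hV hV' hh nE r x(2,3)] .
      moreover have "x \<notin> Rt" using x(3) by blast
      ultimately show "z \<in> Pset VH E col Rt \<phi>" using x unfolding Pset_def by blast
    qed
    have "card (Pset VH ?E' ?c' ?S \<phi> \<inter> X) \<le> card (Pset VH E col Rt \<phi> \<inter> X)"
      by (rule card_mono) (use finX Psub in auto)
    then show ?thesis using sum unfolding Rval_def by linarith
  qed
  have "good s D V G t VH ?E' ?c' ?S \<phi>"
    unfolding good_def
  proof (intro conjI allI impI)
    show "rooted t VH ?E' ?c' ?S" using R' .
    show "embedding V G VH ?E' ?c' \<phi>" using emb' .
  next
    fix X :: "('v \<times> nat) set" assume X: "X \<subseteq> V \<times> {1..t}" "card X \<le> s"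
    show "0 \<le> Rval V G D VH ?E' ?c' ?S \<phi> X" using RX[OF X] Rmono[OF X(1)] by linarith
  qed
  then show ?thesis unfolding Seq .
qed


end
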